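(* Let $r\geq 1$ be an integer and $\varepsilon,\delta\in(0,1)$. Let $\mathcal{H}$ be an $r$-partite $r$-uniform hypergraph with $n$ vertices and $r$-partition $V(\mathcal{H})=V_1\cup\dots\cup V_r$, and suppose $\mathcal{H}$ is not $(\varepsilon,\delta)$-superspread. Then there exists an index $i\in[r]$ such that $e(\mathcal{H}_{[r]\setminus\{i\}})\geq \frac{\varepsilon\delta}{r2^r}e(\mathcal{H})$.
   Context: An $r$-partite $r$-uniform hypergraph with $r$-partition $V_1\cup\dots\cup V_r$ is one in which every edge contains exactly one vertex from each $V_i$. For $I\subseteq[r]$, the restriction $\mathcal{H}_I$ is the hypergraph with vertex set $V_I=\bigcup_{i\in I}V_i$ and edge set $\{e\cap V_I: e\in E(\mathcal{H})\}$ (a set, so repeated intersections are counted once). For $S\subseteq V(\mathcal{H})$, $\deg_{\mathcal{H}}(S)=|\{e\in E(\mathcal{H}): S\subseteq e\}|$. An edge $e$ is $\delta$-heavy if there exist $S\subseteq e$ and $v\in e\setminus S$ with $\deg_{\mathcal{H}}(S\cup\{v\})\geq\delta\deg_{\mathcal{H}}(S)$. $\mathcal{H}$ is $(\varepsilon,\delta)$-superspread if at most $\varepsilon\,e(\mathcal{H})$ of its edges are $\delta$-heavy. *)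

theory Defs
  imports Complex_Main
begin

definition r_partite_uniform ::
  "nat \<Rightarrow> (nat \<Rightarrow> 'a set) \<Rightarrow> 'a set \<Rightarrow> 'a set set \<Rightarrow> bool" where
  "r_partite_uniform r V W E \<longleftrightarrow>
     finite W \<and>
     (\<Union>i\<in>{1..r}. V i) = W \<and>
     (\<forall>i\<in>{1..r}. \<forall>j\<in>{1..r}. i \<noteq> j \<longrightarrow> V i \<inter> V j = {}) \<and>
     (\<forall>e\<in>E. e \<subseteq> W \<and> (\<forall>i\<in>{1..r}. card (e \<inter> V i) = 1))"

definition restrict_edges ::
  "(nat \<Rightarrow> 'a set) \<Rightarrow> nat set \<Rightarrow> 'a set set \<Rightarrow> 'a set set" where
  "restrict_edges V I E = (\<lambda>e. e \<inter> (\<Union>i\<in>I. V i)) ` E"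

definition hdeg :: "'a set set \<Rightarrow> 'a set \<Rightarrow> nat" where
  "hdeg E S = card {e\<in>E. S \<subseteq> e}"

definition heavy :: "real \<Rightarrow> 'a set set \<Rightarrow> 'a set \<Rightarrow> bool" where
  "heavy \<delta> E e \<longleftrightarrow> (\<exists>S\<subseteq>e. \<exists>v\<in>e - S. real (hdeg E (insert v S)) \<ge> \<delta> * real (hdeg E S))"

definition superspread :: "real \<Rightarrow> real \<Rightarrow> 'a set set \<Rightarrow> bool" where
  "superspread \<epsilon> \<delta> E \<longleftrightarrow> real (card {e\<in>E. heavy \<delta> E e}) \<le> \<epsilon> * real (card E)"

end

theory Submission
  imports Defs
begin

lemma rp_finE: "r_partite_uniform r V W E \<Longrightarrow> finite E"
  unfolding r_partite_uniform_def
  by (meson Pow_iff finite_Pow_iff finite_subset subsetI)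

lemma rp_single:
  assumes "r_partite_uniform r V W E" "e\<in>E" "j\<in>{1..r}" "x\<in>e" "x\<in>V j"
  shows "e \<inter> V j = {x}"
proof -
  have "card (e \<inter> V j) = 1" using assms unfolding r_partite_uniform_def by blast
  then obtain y where "e \<inter> V j = {y}" by (meson card_1_singletonE)
  thus ?thesis using assms by auto
qed

lemma rp_ex:
  assumes "r_partite_uniform r V W E" "e\<in>E" "j\<in>{1..r}"
  shows "\<exists>x. e \<inter> V j = {x}"
proof -
  have "card (e \<inter> V j) = 1" using assms unfolding r_partite_uniform_def by blast
  then show ?thesis by (meson card_1_singletonE)
qed

lemma rp_cover:
  assumes "r_partite_uniform r V W E" "e\<in>E" "x\<in>e"
  shows "\<exists>j\<in>{1..r}. x\<in>V j"
  using assms unfolding r_partite_uniform_def by blast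

lemma rp_sub:
  assumes "r_partite_uniform r V W E" "e\<in>E"
  shows "e \<subseteq> (\<Union>j\<in>{1..r}. V j)"
  using assms unfolding r_partite_uniform_def by blast

lemma S_unique:
  assumes rp: "r_partite_uniform r V W E" and "e1\<in>E" "e2\<in>E" "J \<subseteq> {1..r}"
    and "e1 \<inter> (\<Union>j\<in>J. V j) \<subseteq> e2"
  shows "e2 \<inter> (\<Union>j\<in>J. V j) = e1 \<inter> (\<Union>j\<in>J. V j)"
proof
  show "e1 \<inter> (\<Union>j\<in>J. V j) \<subseteq> e2 \<inter> (\<Union>j\<in>J. V j)" using assms by blast
  show "e2 \<inter> (\<Union>j\<in>J. V j) \<subseteq> e1 \<inter> (\<Union>j\<in>J. V j)"
  proof
    fix x assume "x \<in> e2 \<inter> (\<Union>j\<in>J. V j)"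
    then obtain j where j: "j\<in>J" "x\<in>e2" "x\<in>V j" by blast
    have jr: "j\<in>{1..r}" using j assms by blast
    obtain y where y: "e1 \<inter> V j = {y}" using rp_ex[OF rp assms(2) jr] by blast
    have y1: "y \<in> e1" "y \<in> V j" using y by auto
    have "y \<in> e1 \<inter> (\<Union>j\<in>J. V j)" using y1 j(1) by auto
    then have "y \<in> e2" using assms(5) by (rule subsetD[rotated])
    moreover have "e2 \<inter> V j = {x}" using rp_single[OF rp assms(3) jr j(2,3)] .
    ultimately have "x = y" using y1(2) by auto
    thus "x \<in> e1 \<inter> (\<Union>j\<in>J. V j)" using y1 j(1) by auto
  qed
qed

definition HT :: "(nat \<Rightarrow> 'a set) \<Rightarrow> real \<Rightarrow> 'a set set \<Rightarrow> nat set \<Rightarrow> nat \<Rightarrow> 'a set set" where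
  "HT V \<delta> E J i = {e\<in>E. \<exists>v\<in>e \<inter> V i. \<delta> * real (hdeg E (e \<inter> (\<Union>j\<in>J. V j)))
       \<le> real (hdeg E (insert v (e \<inter> (\<Union>j\<in>J. V j))))}"

lemma heavy_type:
  assumes rp: "r_partite_uniform r V W E" and e: "e\<in>E" and h: "heavy \<delta> E e"
  shows "\<exists>J i. J \<subseteq> {1..r} \<and> i \<in> {1..r} \<and> i \<notin> J \<and> e \<in> HT V \<delta> E J i"
proof -
  obtain S v where S: "S \<subseteq> e" "v \<in> e - S" "real (hdeg E (insert v S)) \<ge> \<delta> * real (hdeg E S)"
    using h unfolding heavy_def by blast
  define J where "J = {j\<in>{1..r}. e \<inter> V j \<subseteq> S}"
  have SJ: "e \<inter> (\<Union>j\<in>J. V j) = S"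
  proof
    show "e \<inter> (\<Union>j\<in>J. V j) \<subseteq> S" unfolding J_def by blast
    show "S \<subseteq> e \<inter> (\<Union>j\<in>J. V j)"
    proof
      fix x assume x: "x\<in>S"
      then obtain j where j: "j\<in>{1..r}" "x\<in>V j" using rp_cover[OF rp e] S by blast
      have "e \<inter> V j = {x}" using rp_single[OF rp e j(1)] x S j by blast
      then have "j \<in> J" unfolding J_def using j x by auto
      thus "x \<in> e \<inter> (\<Union>j\<in>J. V j)" using x S j by blast
    qed
  qed
  obtain i where i: "i\<in>{1..r}" "v\<in>V i" using rp_cover[OF rp e] S by blast
  have "e \<inter> V i = {v}" using rp_single[OF rp e i(1)] S i by blast
  then have "i \<notin> J" unfolding J_def using S by blast
  moreover have "e \<in> E \<and> (\<exists>v\<in>e \<inter> V i. \<delta> * real (hdeg E (e \<inter> (\<Union>j\<in>J. V j)))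
       \<le> real (hdeg E (insert v (e \<inter> (\<Union>j\<in>J. V j)))))"
    unfolding SJ using e S(2,3) i(2) by blast
  then have "e \<in> HT V \<delta> E J i" unfolding HT_def by (rule CollectI)
  moreover have "J \<subseteq> {1..r}" unfolding J_def by blast
  ultimately show ?thesis using i(1) by blast
qed

lemma count_HT:
  assumes rp: "r_partite_uniform r V W E" and J: "J \<subseteq> {1..r}" and i: "i\<in>{1..r}" "i\<notin>J"
    and d: "\<delta> > 0"
  shows "\<delta> * real (card (HT V \<delta> E J i)) \<le> real (card (restrict_edges V ({1..r}-{i}) E))"
proof -
  define U where "U = (\<Union>j\<in>J. V j)"
  define R where "R = (\<Union>j\<in>{1..r}-{i}. V j)"
  define H where "H = HT V \<delta> E J i"
  define T where "T = (\<lambda>e. e \<inter> U) ` H"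
  have fE: "finite E" using rp_finE[OF rp] .
  have HE: "H \<subseteq> E" unfolding H_def HT_def by blast
  have fH: "finite H" using HE fE finite_subset by blast
  have fT: "finite T" unfolding T_def using fH by blast
  have ex: "\<exists>v. v\<in>V i \<and> \<delta> * real (hdeg E S) \<le> real (hdeg E (insert v S))" if "S\<in>T" for S
    using that unfolding T_def H_def HT_def U_def by blast
  define f where "f S = (SOME v. v\<in>V i \<and> \<delta> * real (hdeg E S) \<le> real (hdeg E (insert v S)))" for S
  have f: "f S \<in> V i \<and> \<delta> * real (hdeg E S) \<le> real (hdeg E (insert (f S) S))" if "S\<in>T" for S
    unfolding f_def using someI_ex[OF ex[OF that]] .
  have Tform: "\<exists>e\<in>E. S = e \<inter> U" if "S\<in>T" for S using that HE unfolding T_def by blast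
  have "H \<subseteq> (\<Union>S\<in>T. {e\<in>E. S \<subseteq> e})" unfolding T_def using HE by blast
  moreover have "finite (\<Union>S\<in>T. {e\<in>E. S \<subseteq> e})"
    by (rule finite_subset[OF _ fE]) blast
  ultimately have "card H \<le> card (\<Union>S\<in>T. {e\<in>E. S \<subseteq> e})"
    by (simp add: card_mono)
  also have "\<dots> \<le> (\<Sum>S\<in>T. card {e\<in>E. S \<subseteq> e})" using card_UN_le[OF fT] by blast
  finally have c1: "real (card H) \<le> (\<Sum>S\<in>T. real (hdeg E S))"
    unfolding hdeg_def unfolding of_nat_sum[symmetric] by (rule of_nat_mono)
  have "\<delta> * real (card H) \<le> (\<Sum>S\<in>T. \<delta> * real (hdeg E S))"
    using c1 d by (simp add: sum_distrib_left[symmetric])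
  also have "\<dots> \<le> (\<Sum>S\<in>T. real (hdeg E (insert (f S) S)))"
    by (rule sum_mono) (use f in blast)
  also have "\<dots> = real (\<Sum>S\<in>T. card {e\<in>E. insert (f S) S \<subseteq> e})"
    unfolding hdeg_def by simp
  also have "(\<Sum>S\<in>T. card {e\<in>E. insert (f S) S \<subseteq> e}) = card (\<Union>S\<in>T. {e\<in>E. insert (f S) S \<subseteq> e})"
  proof (rule card_UN_disjoint[symmetric])
    show "finite T" by fact
    show "\<forall>S\<in>T. finite {e\<in>E. insert (f S) S \<subseteq> e}" using fE by auto
    show "\<forall>S1\<in>T. \<forall>S2\<in>T. S1 \<noteq> S2 \<longrightarrow> {e\<in>E. insert (f S1) S1 \<subseteq> e} \<inter> {e\<in>E. insert (f S2) S2 \<subseteq> e} = {}"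
    proof (intro ballI impI)
      fix S1 S2 assume s: "S1\<in>T" "S2\<in>T" "S1\<noteq>S2"
      show "{e\<in>E. insert (f S1) S1 \<subseteq> e} \<inter> {e\<in>E. insert (f S2) S2 \<subseteq> e} = {}"
      proof (rule ccontr)
        assume "\<not> ?thesis"
        then obtain e where e: "e\<in>E" "S1 \<subseteq> e" "S2 \<subseteq> e" by blast
        obtain e1 where e1: "e1\<in>E" "S1 = e1 \<inter> U" using Tform s by blast
        obtain e2 where e2: "e2\<in>E" "S2 = e2 \<inter> U" using Tform s by blast
        have "e \<inter> U = S1" using S_unique[OF rp e1(1) e(1) J] e e1 unfolding U_def by blast
        moreover have "e \<inter> U = S2" using S_unique[OF rp e2(1) e(1) J] e e2 unfolding U_def by blast
        ultimately show False using s by simp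
      qed
    qed
  qed
  also have "card (\<Union>S\<in>T. {e\<in>E. insert (f S) S \<subseteq> e}) \<le> card (restrict_edges V ({1..r}-{i}) E)"
  proof (rule card_inj_on_le)
    let ?D = "\<Union>S\<in>T. {e\<in>E. insert (f S) S \<subseteq> e}"
    show "finite (restrict_edges V ({1..r}-{i}) E)" unfolding restrict_edges_def using fE by simp
    show "(\<lambda>e. e \<inter> R) ` ?D \<subseteq> restrict_edges V ({1..r}-{i}) E"
      unfolding restrict_edges_def R_def by blast
    have UR: "U \<subseteq> R" unfolding U_def R_def using J i by blast
    show "inj_on (\<lambda>e. e \<inter> R) ?D"
    proof
      fix a b assume a: "a \<in> ?D" and b: "b \<in> ?D" and ab: "a \<inter> R = b \<inter> R"
      obtain S1 where S1: "S1\<in>T" "a\<in>E" "insert (f S1) S1 \<subseteq> a" using a by blast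
      obtain S2 where S2: "S2\<in>T" "b\<in>E" "insert (f S2) S2 \<subseteq> b" using b by blast
      obtain e1 where e1: "e1\<in>E" "S1 = e1 \<inter> U" using Tform S1 by blast
      obtain e2 where e2: "e2\<in>E" "S2 = e2 \<inter> U" using Tform S2 by blast
      have aU: "a \<inter> U = S1" using S_unique[OF rp e1(1) S1(2) J] S1 e1 unfolding U_def by blast
      have bU: "b \<inter> U = S2" using S_unique[OF rp e2(1) S2(2) J] S2 e2 unfolding U_def by blast
      have "a \<inter> U = b \<inter> U" using ab UR by blast
      then have SS: "S1 = S2" using aU bU by simp
      have fa: "f S1 \<in> a" "f S1 \<in> b" "f S1 \<in> V i" using S1 S2 SS f[OF S1(1)] by auto
      have ai: "a \<inter> V i = {f S1}" using rp_single[OF rp S1(2) i(1) fa(1) fa(3)] .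
      have bi: "b \<inter> V i = {f S1}" using rp_single[OF rp S2(2) i(1) fa(2) fa(3)] .
      have "(\<Union>j\<in>{1..r}. V j) = R \<union> V i" unfolding R_def using i by blast
      then have "a = (a \<inter> R) \<union> (a \<inter> V i)" "b = (b \<inter> R) \<union> (b \<inter> V i)"
        using rp_sub[OF rp S1(2)] rp_sub[OF rp S2(2)] by blast+
      then show "a = b" using ab ai bi by metis
    qed
  qed
  finally show ?thesis unfolding H_def by simp
qed

theorem lemma2p6:
  fixes r n :: nat and \<epsilon> \<delta> :: real
    and V :: "nat \<Rightarrow> 'a set" and W :: "'a set" and E :: "'a set set"
  assumes "r \<ge> 1"
    and "0 < \<epsilon>" "\<epsilon> < 1" "0 < \<delta>" "\<delta> < 1"
    and "r_partite_uniform r V W E"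
    and "card W = n"
    and "\<not> superspread \<epsilon> \<delta> E"
  shows "\<exists>i\<in>{1..r}. real (card (restrict_edges V ({1..r} - {i}) E))
           \<ge> \<epsilon> * \<delta> / (real r * 2 ^ r) * real (card E)"
proof (rule ccontr)
  assume "\<not> ?thesis"
  then have lt: "\<And>i. i\<in>{1..r} \<Longrightarrow> real (card (restrict_edges V ({1..r} - {i}) E))
           \<le> \<epsilon> * \<delta> / (real r * 2 ^ r) * real (card E)"
    by (meson linorder_not_le less_imp_le)
  note rp = assms(6)
  define c where "c = \<epsilon> * \<delta> / (real r * 2 ^ r) * real (card E)"
  have c0: "0 \<le> c" unfolding c_def using assms(2,4) by simp
  define P where "P = Pow {1..r} \<times> {1..r::nat}"
  have fP: "finite P" unfolding P_def by simp
  have cP: "card P = 2 ^ r * r" unfolding P_def by (simp add: card_cartesian_product card_Pow)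
  define Hv where "Hv = {e\<in>E. heavy \<delta> E e}"
  have fE: "finite E" using rp_finE[OF rp] .
  have "Hv \<subseteq> (\<Union>p\<in>{p\<in>P. snd p \<notin> fst p}. HT V \<delta> E (fst p) (snd p))"
  proof
    fix e assume "e\<in>Hv"
    then obtain J i where "J \<subseteq> {1..r}" "i \<in> {1..r}" "i \<notin> J" "e \<in> HT V \<delta> E J i"
      using heavy_type[OF rp] unfolding Hv_def by blast
    then show "e \<in> (\<Union>p\<in>{p\<in>P. snd p \<notin> fst p}. HT V \<delta> E (fst p) (snd p))"
      by (intro UN_I[of "(J,i)"]) (auto simp: P_def)
  qed
  moreover have "finite (\<Union>p\<in>{p\<in>P. snd p \<notin> fst p}. HT V \<delta> E (fst p) (snd p))"
    by (rule finite_subset[OF _ fE]) (auto simp: HT_def)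
  ultimately have "card Hv \<le> card (\<Union>p\<in>{p\<in>P. snd p \<notin> fst p}. HT V \<delta> E (fst p) (snd p))"
    by (simp add: card_mono)
  also have "\<dots> \<le> (\<Sum>p\<in>{p\<in>P. snd p \<notin> fst p}. card (HT V \<delta> E (fst p) (snd p)))"
    by (rule card_UN_le) (use fP in simp)
  finally have "real (card Hv) \<le> (\<Sum>p\<in>{p\<in>P. snd p \<notin> fst p}. real (card (HT V \<delta> E (fst p) (snd p))))"
    unfolding of_nat_sum[symmetric] by (rule of_nat_mono)
  then have "\<delta> * real (card Hv) \<le> (\<Sum>p\<in>{p\<in>P. snd p \<notin> fst p}. \<delta> * real (card (HT V \<delta> E (fst p) (snd p))))"
    using assms(4) by (simp add: sum_distrib_left[symmetric])
  also have "\<dots> \<le> (\<Sum>p\<in>{p\<in>P. snd p \<notin> fst p}. c)"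
  proof (rule sum_mono)
    fix p assume p: "p \<in> {p\<in>P. snd p \<notin> fst p}"
    have p1: "fst p \<subseteq> {1..r}" "snd p \<in> {1..r}" "snd p \<notin> fst p"
      using p unfolding P_def by (auto simp: mem_Times_iff)
    have "\<delta> * real (card (HT V \<delta> E (fst p) (snd p))) \<le> real (card (restrict_edges V ({1..r}-{snd p}) E))"
      by (rule count_HT[OF rp p1 assms(4)])
    also have "\<dots> \<le> c" unfolding c_def by (rule lt[OF p1(2)])
    finally show "\<delta> * real (card (HT V \<delta> E (fst p) (snd p))) \<le> c" .
  qed
  also have "\<dots> \<le> (\<Sum>p\<in>P. c)"
    by (rule sum_mono2[OF fP]) (use c0 in auto)
  also have "\<dots> = real (2 ^ r * r) * c" using cP by simp
  also have "\<dots> = \<epsilon> * \<delta> * real (card E)" unfolding c_def using assms(1) by (simp add: field_simps)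
  finally have "\<delta> * real (card Hv) \<le> \<delta> * (\<epsilon> * real (card E))" by (simp add: mult.assoc mult.left_commute)
  then have "real (card Hv) \<le> \<epsilon> * real (card E)" using assms(4) by simp
  then show False using assms(8) unfolding superspread_def Hv_def by simp
qed

end
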